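(* For $n\in\{0,1,2,\dots\}$ let \[ e_n=-\frac{1}{(2n)!!}\sum_{k=0}^{n}\binom nk2^k\sum_{\ell=0}^{k}S(k,\ell)\frac{(2\ell-3)!!}{2^{\ell}},\qquad d_n=\frac{(-1)^n}{n!}\sum_{k=0}^{n}(-1)^kS(n,k)(2k-3)!!. \] Then, with the principal branch of the square root, \[ \sqrt{e^x(2-e^x)}=\sum_{n=0}^{\infty}e_nx^n,\qquad |x|<\ln2. \] Moreover, for $n\in\mathbb{N}$ define the $n\times n$ matrices $E^{(n)}=(E_{ij})$ and $F^{(n)}=(F_{ij})$, $1\le i,j\le n$, by $E_{ij}=e_{i-j+1}$ and $F_{ij}=(i-j+2)\,d_{i-j+2}$ for $j\le i+1$, and $E_{ij}=F_{ij}=0$ for $j\ge i+2$. (Thus $e_0=1$, $e_1=0$, $e_2=e_3=-\frac12$, and $d_1=1$, $2d_2=0$, $3d_3=4d_4=\frac12$.) Then for every $n\in\mathbb{N}$, \[ d_{n+1}=\frac{(-1)^n}{n+1}\det E^{(n)}\qquad\text{and}\qquad e_n=(-1)^n\det F^{(n)}. \]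
   Context: $S(n,k)$ are the Stirling numbers of the second kind, given by $\frac{(e^x-1)^k}{k!}=\sum_{n\ge k}S(n,k)\frac{x^n}{n!}$. Double factorials: $(2j)!!=2^jj!$ with $0!!=1$, $(2j-1)!!=1\cdot3\cdots(2j-1)$ for $j\ge1$, and $[-(2j+1)]!!=(-1)^j/(2j-1)!!$ for $j\ge0$, so $(-1)!!=1$ and $(-3)!!=-1$. *)

theory Defs
  imports Complex_Main "HOL-Combinatorics.Stirling" "Jordan_Normal_Form.Determinant"
begin

definition dfact_nat :: "nat \<Rightarrow> real" where
  "dfact_nat k = (\<Prod>i<(k+1) div 2. real (k - 2*i))"

(* double factorial on integers; for negative odd arguments
   [-(2j+1)]!! = (-1)^j / (2j-1)!!, with (-1)!! = 1.
   Negative even arguments never occur; they are set to 0. *)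
definition dfact :: "int \<Rightarrow> real" where
  "dfact m = (if m \<ge> 0 then dfact_nat (nat m)
              else if odd m then
                (let j = nat ((- m - 1) div 2) in
                   (-1)^j / (if j = 0 then 1 else dfact_nat (2*j - 1)))
              else 0)"

definition e_coef :: "nat \<Rightarrow> real" where
  "e_coef n = - (1 / dfact (2 * int n)) *
     (\<Sum>k=0..n. real (n choose k) * 2^k *
        (\<Sum>l=0..k. real (Stirling k l) * dfact (2 * int l - 3) / 2^l))"

definition d_coef :: "nat \<Rightarrow> real" where
  "d_coef n = (-1)^n / fact n *
     (\<Sum>k=0..n. (-1)^k * real (Stirling n k) * dfact (2 * int k - 3))"

(* E^(n), F^(n), 0-indexed: entry (i,j) corresponds to (i+1,j+1) in the paper *)
definition E_mat :: "nat \<Rightarrow> real mat" where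
  "E_mat n = mat n n (\<lambda>(i,j). if j \<le> i + 1 then e_coef (i + 1 - j) else 0)"

definition F_mat :: "nat \<Rightarrow> real mat" where
  "F_mat n = mat n n (\<lambda>(i,j). if j \<le> i + 1
                 then real (i + 2 - j) * d_coef (i + 2 - j) else 0)"

end

theory Submission
  imports Defs "HOL-Complex_Analysis.Complex_Analysis"
begin

hide_const (open) Determinants.det Finite_Cartesian_Product.mat

lemma dfact_nat_0: "dfact_nat 0 = 1" by (simp add: dfact_nat_def)
lemma dfact_nat_1: "dfact_nat 1 = 1" by (simp add: dfact_nat_def)
lemma dfact_nat_Suc0: "dfact_nat (Suc 0) = 1" by (simp add: dfact_nat_def)
lemma dfact_nat_rec: "dfact_nat (k+2) = real (k+2) * dfact_nat k"
proof -
  have "(k+2+1) div 2 = Suc ((k+1) div 2)" by simp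
  then have "dfact_nat (k+2) = (\<Prod>i<Suc ((k+1) div 2). real (k+2 - 2*i))" by (simp add: dfact_nat_def)
  also have "\<dots> = real (k+2) * (\<Prod>i<(k+1) div 2. real (k+2 - 2*Suc i))"
    by (subst prod.lessThan_Suc_shift) simp
  also have "(\<Prod>i<(k+1) div 2. real (k+2 - 2*Suc i)) = dfact_nat k"
    unfolding dfact_nat_def by (intro prod.cong) auto
  finally show ?thesis .
qed

lemma dfact_nat_even: "dfact_nat (2*n) = 2^n * fact n"
proof (induction n)
  case 0 then show ?case by (simp add: dfact_nat_0)
next
  case (Suc n)
  have "dfact_nat (2*Suc n) = dfact_nat (2*n+2)" by simp
  also have "\<dots> = real (2*n+2) * dfact_nat (2*n)" by (rule dfact_nat_rec)
  finally show ?case using Suc by simp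
qed

lemma dfact_m3: "dfact (-3) = -1"
  by (simp add: dfact_def dfact_nat_1 dfact_nat_Suc0)
lemma dfact_m1: "dfact (-1) = 1"
  by (simp add: dfact_def)
lemma dfact_nonneg: "m \<ge> 0 \<Longrightarrow> dfact m = dfact_nat (nat m)"
  by (simp add: dfact_def)

lemma dfact_step: "dfact (2 * int k - 1) = (2 * real k - 1) * dfact (2 * int k - 3)"
proof (cases k)
  case 0 then show ?thesis by (simp add: dfact_m1 dfact_m3)
next
  case (Suc m)
  show ?thesis
  proof (cases m)
    case 0 then show ?thesis using Suc by (simp add: dfact_m1 dfact_nonneg dfact_nat_1 dfact_nat_Suc0)
  next
    case (Suc p)
    have a: "2 * int k - 1 = int (2*p+1+2)" "2 * int k - 3 = int (2*p+1)"
      using Suc \<open>k = Suc m\<close> by auto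
    show ?thesis unfolding a dfact_nonneg[OF of_nat_0_le_iff] nat_int dfact_nat_rec
      using Suc \<open>k = Suc m\<close> by simp
  qed
qed

lemma gchoose_Suc_rec:
  fixes a :: "'a::field_char_0"
  shows "a gchoose (Suc k) = (a - of_nat k) * (a gchoose k) / of_nat (Suc k)"
proof -
  have "a * (a gchoose k) = of_nat k * (a gchoose k) + of_nat (Suc k) * (a gchoose (Suc k))"
    by (rule gbinomial_mult_1)
  then have "of_nat (Suc k) * (a gchoose (Suc k)) = (a - of_nat k) * (a gchoose k)"
    by (simp add: algebra_simps)
  then show ?thesis by (simp add: field_simps del: of_nat_Suc)
qed

lemma dfact_gchoose: "dfact (2 * int l - 3) = - ((-2)^l * fact l * ((1/2::real) gchoose l))"
proof (induction l)
  case 0 then show ?case by (simp add: dfact_m3)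
next
  case (Suc l)
  have "2 * int (Suc l) - 3 = 2 * int l - 1" by simp
  then have "dfact (2 * int (Suc l) - 3) = (2 * real l - 1) * dfact (2 * int l - 3)"
    using dfact_step by simp
  also have "\<dots> = - ((-2)^Suc l * fact (Suc l) * ((1/2::real) gchoose Suc l))"
    unfolding Suc gchoose_Suc_rec[of "1/2::real" l] by (simp add: field_simps)
  finally show ?case .
qed

definition Ce :: "real fps" where "Ce = Abs_fps (\<lambda>l. dfact (2 * int l - 3) / (2^l * fact l))"
definition Cd :: "real fps" where "Cd = Abs_fps (\<lambda>l. (-1)^l * dfact (2 * int l - 3) / fact l)"

lemma Ce_nth: "Ce $ l = - ((-1)^l * ((1/2::real) gchoose l))"
  unfolding Ce_def dfact_gchoose by (simp add: field_simps power_mult_distrib[symmetric])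
lemma Cd_nth: "Cd $ l = - (2^l * ((1/2::real) gchoose l))"
  unfolding Cd_def dfact_gchoose by (simp add: field_simps power_mult_distrib[symmetric])

lemma one_gchoose: "(1::real) gchoose n = (if n = 0 \<or> n = 1 then 1 else 0)"
proof (cases n)
  case (Suc m) then show ?thesis
    by (cases m) (auto simp: gbinomial_Suc)
qed simp

lemma Ce_sq: "Ce * Ce = 1 - fps_X"
proof (rule fps_ext)
  fix n
  have "(Ce * Ce) $ n = (\<Sum>i=0..n. (-1)^n * (((1/2::real) gchoose i) * ((1/2) gchoose (n-i))))"
    unfolding fps_mult_nth Ce_nth
    by (intro sum.cong) (auto simp: power_add[symmetric])
  also have "\<dots> = (-1)^n * ((1::real) gchoose n)"
    by (simp add: sum_distrib_left[symmetric] gbinomial_Vandermonde)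
  finally show "(Ce * Ce) $ n = (1 - fps_X) $ n"
    by (simp add: one_gchoose)
qed

lemma Cd_sq: "Cd * Cd = 1 + fps_const 2 * fps_X"
proof (rule fps_ext)
  fix n
  have "(Cd * Cd) $ n = (\<Sum>i=0..n. 2^n * (((1/2::real) gchoose i) * ((1/2) gchoose (n-i))))"
    unfolding fps_mult_nth Cd_nth
    by (intro sum.cong) (auto simp: power_add[symmetric])
  also have "\<dots> = 2^n * ((1::real) gchoose n)"
    by (simp add: sum_distrib_left[symmetric] gbinomial_Vandermonde)
  finally show "(Cd * Cd) $ n = (1 + fps_const 2 * fps_X) $ n"
    by (cases "n = 1") (auto simp: one_gchoose mult.commute)
qed

lemma stirling_fps:
  fixes a :: real
  shows "((fps_exp a - 1)^l) $ k = fact l * real (Stirling k l) * a^k / fact k"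
proof (induction k arbitrary: l)
  case 0
  show ?case by (cases l) (simp_all add: fps_nth_power_0)
next
  case (Suc k)
  show ?case
  proof (cases l)
    case 0 then show ?thesis by simp
  next
    case (Suc m)
    let ?Y = "fps_exp a - 1"
    have "fps_deriv ?Y = fps_const a * (?Y + 1)" by simp
    then have d: "fps_deriv (?Y^Suc m) = fps_const (real (Suc m) * a) * (?Y^Suc m + ?Y^m)"
      unfolding fps_deriv_power by (simp add: algebra_simps fps_const_mult[symmetric] del: fps_const_mult)
    have "real (Suc k) * (?Y^Suc m) $ Suc k = fps_deriv (?Y^Suc m) $ k"
      by (subst fps_deriv_nth) (simp del: power_Suc)
    also have "\<dots> = real (Suc m) * a * ((?Y^Suc m) $ k + (?Y^m) $ k)"
      unfolding d by simp
    also have "\<dots> = real (Suc m) * a * (fact (Suc m) * real (Stirling k (Suc m)) * a^k / fact k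
         + fact m * real (Stirling k m) * a^k / fact k)"
      by (simp only: Suc.IH)
    also have "\<dots> = real (Suc k) * (fact (Suc m) * real (Stirling (Suc k) (Suc m)) * a ^ Suc k / fact (Suc k))"
    proof -
      have e1: "real (Stirling (Suc k) (Suc m)) = real (Suc m) * real (Stirling k (Suc m)) + real (Stirling k m)"
        by (simp add: algebra_simps)
      have e2: "fact (Suc m) = real (Suc m) * fact m" "fact (Suc k) = real (Suc k) * fact k"
        by simp_all
      have K: "fact k \<noteq> (0::real)" by simp
      show ?thesis unfolding e1 e2 using K
        by (simp add: field_simps del: of_nat_Suc)
    qed
    finally have fin: "real (Suc k) * (?Y^Suc m) $ Suc k = real (Suc k) * (fact (Suc m) * real (Stirling (Suc k) (Suc m)) * a ^ Suc k / fact (Suc k))" .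
    have nz: "real (Suc k) \<noteq> 0" by (simp del: of_nat_Suc)
    show ?thesis unfolding \<open>l = Suc m\<close> using fin nz by (metis mult_left_cancel)
  qed
qed

definition Yp :: "real fps" where "Yp = fps_exp 1 - 1"
definition Ym :: "real fps" where "Ym = fps_exp (-1) - 1"
definition Dfps :: "real fps" where "Dfps = Cd oo Ym"
definition Efps :: "real fps" where "Efps = - ((Ce oo Yp) * fps_exp (1/2))"

lemma Yp0: "Yp $ 0 = 0" by (simp add: Yp_def)
lemma Ym0: "Ym $ 0 = 0" by (simp add: Ym_def)

lemma d_coef_D: "d_coef n = Dfps $ n"
proof -
  have "Dfps $ n = (\<Sum>i=0..n. (-1)^n / fact n * ((-1)^i * real (Stirling n i) * dfact (2 * int i - 3)))"
    unfolding Dfps_def fps_compose_nth Ym_def stirling_fps Cd_def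
    by (intro sum.cong) (auto simp: field_simps)
  then show ?thesis unfolding d_coef_def by (simp add: sum_distrib_left)
qed

lemma e_coef_E: "e_coef n = Efps $ n"
proof -
  have inner: "(Ce oo Yp) $ k = (\<Sum>l=0..k. real (Stirling k l) * dfact (2 * int l - 3) / 2^l) / fact k" for k
    unfolding fps_compose_nth Yp_def stirling_fps Ce_def sum_divide_distrib
    by (intro sum.cong) (auto simp: field_simps)
  have coeff: "1 / dfact (2 * int n) * (real (n choose k) * 2^k) = (1/2)^(n-k) / fact (n-k) / fact k"
    if "k \<le> n" for k
  proof -
    have "dfact (2 * int n) = 2^n * fact n"
      by (simp add: dfact_nonneg dfact_nat_even nat_mult_distrib)
    moreover have "real (n choose k) = fact n / (fact k * fact (n-k))"
      using that by (rule binomial_fact)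
    moreover have "(2::real)^n = 2^k * 2^(n-k)"
      using that by (simp add: power_add[symmetric])
    ultimately show ?thesis by (simp add: field_simps power_one_over)
  qed
  have "Efps $ n = - (\<Sum>k=0..n. (Ce oo Yp) $ k * ((1/2)^(n-k) / fact (n-k)))"
    unfolding Efps_def by (simp add: sum_negf fps_mult_nth)
  also have "\<dots> = - (\<Sum>k=0..n. 1 / dfact (2 * int n) * (real (n choose k) * 2^k) *
       (\<Sum>l=0..k. real (Stirling k l) * dfact (2 * int l - 3) / 2^l))"
  proof (intro arg_cong[where f=uminus] sum.cong refl)
    fix k assume "k \<in> {0..n}"
    then have k: "k \<le> n" by simp
    show "(Ce oo Yp) $ k * ((1/2)^(n-k) / fact (n-k)) = 1 / dfact (2 * int n) * (real (n choose k) * 2^k) *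
       (\<Sum>l=0..k. real (Stirling k l) * dfact (2 * int l - 3) / 2^l)"
      unfolding coeff[OF k] inner by (simp add: field_simps)
  qed
  also have "\<dots> = e_coef n"
    unfolding e_coef_def by (simp add: sum_distrib_left mult.assoc sum_negf)
  finally show ?thesis ..
qed

lemma fps_sqrt_unique:
  fixes u v :: "'a::field_char_0 fps"
  assumes "u * u = v * v" "u $ 0 = v $ 0" "u $ 0 \<noteq> 0"
  shows "u = v"
proof -
  have "(u - v) * (u + v) = 0" using assms(1) by (simp add: algebra_simps)
  moreover have "u + v \<noteq> 0"
  proof
    assume "u + v = 0"
    then have "(u + v) $ 0 = 0" by simp
    then show False using assms(2,3) by simp
  qed
  ultimately show ?thesis by simp
qed

lemma exp_half_sq: "fps_exp (c/2) * fps_exp (c/2) = fps_exp (c::real)"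
  by (simp add: fps_exp_add_mult[symmetric])

lemma E_sq: "Efps * Efps = 2 * fps_exp 1 - fps_exp 2"
proof -
  have "Efps * Efps = ((Ce * Ce) oo Yp) * (fps_exp (1/2) * fps_exp (1/2))"
    unfolding Efps_def fps_compose_mult_distrib[OF Yp0] by (simp add: algebra_simps)
  also have "\<dots> = (1 - Yp) * fps_exp 1"
    unfolding Ce_sq using exp_half_sq[of 1] by (simp add: fps_compose_sub_distrib Yp0)
  also have "\<dots> = 2 * fps_exp 1 - fps_exp 1 * fps_exp 1"
    unfolding Yp_def by (simp add: algebra_simps)
  also have "fps_exp 1 * fps_exp 1 = fps_exp (2::real)"
    using exp_half_sq[of 2] by simp
  finally show ?thesis .
qed

lemma E0: "Efps $ 0 = 1"
  by (simp add: Efps_def Ce_def dfact_m3)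

lemma key: "Cd oo Ym = (Ce oo Yp) * fps_exp (-1/2)"
proof (rule fps_sqrt_unique)
  have "(Cd oo Ym) * (Cd oo Ym) = (Cd * Cd) oo Ym"
    by (simp add: fps_compose_mult_distrib[OF Ym0])
  also have "\<dots> = 1 + fps_const 2 * Ym"
    unfolding Cd_sq fps_compose_add_distrib fps_const_mult_apply_left[symmetric]
    by (simp add: Ym0)
  also have "\<dots> = 2 * fps_exp (-1) - 1"
    by (simp add: Ym_def algebra_simps numeral_fps_const)
  also have "\<dots> = ((Ce * Ce) oo Yp) * (fps_exp (-1/2) * fps_exp (-1/2))"
  proof -
    have "fps_exp 1 * fps_exp (-1) = (1::real fps)"
      by (simp add: fps_exp_add_mult[symmetric])
    then show ?thesis
      unfolding Ce_sq using exp_half_sq[of "-1"]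
      by (simp add: fps_compose_sub_distrib Yp0 Yp_def algebra_simps)
  qed
  also have "\<dots> = ((Ce oo Yp) * fps_exp (-1/2)) * ((Ce oo Yp) * fps_exp (-1/2))"
    unfolding fps_compose_mult_distrib[OF Yp0] by (simp add: algebra_simps)
  finally show "(Cd oo Ym) * (Cd oo Ym) = ((Ce oo Yp) * fps_exp (-1/2)) * ((Ce oo Yp) * fps_exp (-1/2))" .
  show "(Cd oo Ym) $ 0 = ((Ce oo Yp) * fps_exp (- 1 / 2)) $ 0"
    by (simp add: Cd_def Ce_def)
  show "(Cd oo Ym) $ 0 \<noteq> 0"
    by (simp add: Cd_def dfact_m3)
qed

lemma Cd_deriv: "Cd * fps_deriv Cd = 1"
proof -
  have "fps_deriv (Cd * Cd) = fps_const 2 * (Cd * fps_deriv Cd)"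
    by (simp add: algebra_simps numeral_fps_const[symmetric] mult_2)
  also have "fps_deriv (Cd * Cd) = fps_const 2"
    unfolding Cd_sq by simp
  finally have "fps_const 2 * (Cd * fps_deriv Cd) = fps_const 2 * 1" by simp
  then show ?thesis by (subst (asm) mult_left_cancel) auto
qed

lemma ED: "Efps * fps_deriv Dfps = 1"
proof -
  have dY: "fps_deriv Ym = - fps_exp (-1)"
    by (simp add: Ym_def fps_const_neg[symmetric] del: fps_const_neg)
  have ee: "fps_exp (1/2) * fps_exp (-1) = fps_exp (-1/2::real)"
    by (simp add: fps_exp_add_mult[symmetric])
  have "Efps * fps_deriv Dfps = ((Ce oo Yp) * (fps_exp (1/2) * fps_exp (-1))) * (fps_deriv Cd oo Ym)"
    unfolding Dfps_def fps_compose_deriv[OF Ym0] dY Efps_def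
    by (simp add: algebra_simps)
  also have "\<dots> = (Cd oo Ym) * (fps_deriv Cd oo Ym)"
    unfolding ee key ..
  also have "\<dots> = 1"
    unfolding fps_compose_mult_distrib[OF Ym0, symmetric] Cd_deriv by simp
  finally show ?thesis .
qed

lemma hess_det:
  fixes A B :: "real fps"
  assumes AB: "A * B = 1" and A0: "fps_nth A 0 = 1"
  shows "det (mat n n (\<lambda>(i,j). if j \<le> i + 1 then fps_nth A (i+1-j) else 0)) = (-1)^n * fps_nth B n"
proof -
  define N where "N = Suc n"
  define T where "T = mat N N (\<lambda>(i,j). if j \<le> i then fps_nth A (i-j) else 0)"
  define TB where "TB = mat N N (\<lambda>(i,j). if j \<le> i then fps_nth B (i-j) else 0)"
  have T: "T \<in> carrier_mat N N" and TB: "TB \<in> carrier_mat N N" by (simp_all add: T_def TB_def)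
  have detT: "det T = 1"
  proof -
    have "det T = prod_list (diag_mat T)"
      by (rule det_lower_triangular[OF _ T]) (simp add: T_def)
    also have "diag_mat T = replicate N 1"
      by (rule nth_equalityI) (simp_all add: diag_mat_def T_def A0)
    finally show ?thesis by simp
  qed
  have BA: "B * A = 1" using AB by (simp add: mult.commute)
  have prod: "T * TB = 1\<^sub>m N"
  proof (rule eq_matI)
    fix i j assume "i < dim_row (1\<^sub>m N)" and "j < dim_col (1\<^sub>m N)"
    then have i: "i < N" and j: "j < N" by auto
    let ?f = "\<lambda>k. (if k \<le> i then fps_nth A (i-k) else 0) * (if j \<le> k then fps_nth B (k-j) else 0)"
    have "(T * TB) $$ (i,j) = (\<Sum>k\<in>{0..<N}. ?f k)"
      using i j by (simp add: T_def TB_def scalar_prod_def)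
    also have "\<dots> = (if i = j then 1 else 0)"
    proof (cases "j \<le> i")
      case True
      have "(\<Sum>k\<in>{0..<N}. ?f k) = (\<Sum>k\<in>{j..i}. ?f k)"
        by (rule sum.mono_neutral_right) (use i in auto)
      also have "\<dots> = (\<Sum>k\<in>{0+j..(i-j)+j}. fps_nth A (i-k) * fps_nth B (k-j))"
        using True by (intro sum.cong) auto
      also have "\<dots> = (\<Sum>m=0..i-j. fps_nth B m * fps_nth A (i-j-m))"
        by (subst sum.shift_bounds_cl_nat_ivl) (simp add: mult.commute add.commute)
      also have "\<dots> = fps_nth (B * A) (i-j)" by (simp add: fps_mult_nth)
      also have "\<dots> = (if i = j then 1 else 0)" using True by (simp add: BA)
      finally show ?thesis .
    next
      case False
      then show ?thesis by (auto intro!: sum.neutral)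
    qed
    also have "\<dots> = (1\<^sub>m N) $$ (i,j)" using i j by simp
    finally show "(T * TB) $$ (i,j) = (1\<^sub>m N) $$ (i,j)" .
  qed (use T TB in auto)
  have adj: "adj_mat T = TB"
  proof -
    have aT: "adj_mat T \<in> carrier_mat N N" using adj_mat(1)[OF T] .
    have "adj_mat T = adj_mat T * (T * TB)" using aT by (simp add: prod)
    also have "\<dots> = (adj_mat T * T) * TB" using aT T TB by (simp add: assoc_mult_mat)
    also have "\<dots> = TB"
    proof -
      have one: "(1::real) \<cdot>\<^sub>m 1\<^sub>m N = 1\<^sub>m N" by (rule eq_matI) auto
      show ?thesis using adj_mat(3)[OF T] detT TB one by simp
    qed
    finally show ?thesis .
  qed
  have "adj_mat T $$ (n, 0) = cofactor T 0 n"
    using T by (simp add: adj_mat_def N_def)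
  also have "\<dots> = (-1)^n * det (mat_delete T 0 n)"
    by (simp add: cofactor_def)
  also have "mat_delete T 0 n = mat n n (\<lambda>(i,j). if j \<le> i + 1 then fps_nth A (i+1-j) else 0)"
    by (rule eq_matI) (auto simp: mat_delete_def T_def N_def)
  finally have "(-1)^n * det (mat n n (\<lambda>(i,j). if j \<le> i + 1 then fps_nth A (i+1-j) else 0)) = fps_nth B n"
    unfolding adj by (simp add: TB_def N_def)
  then have "(-1)^n * ((-1)^n * det (mat n n (\<lambda>(i,j). if j \<le> i + 1 then fps_nth A (i+1-j) else 0))) = (-1)^n * fps_nth B n"
    by simp
  then show ?thesis by (simp add: power_mult_distrib[symmetric] mult.assoc[symmetric])
qed

lemma exp_bound:
  fixes z :: complex
  shows "norm (exp z - 1) \<le> exp (norm z) - 1"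
proof -
  have s1: "(\<lambda>n. z^Suc n /\<^sub>R fact (Suc n)) sums (exp z - 1)"
    using exp_converges[of z] by (subst sums_Suc_iff) simp
  have s2: "(\<lambda>n. norm z^Suc n /\<^sub>R fact (Suc n)) sums (exp (norm z) - 1)"
    using exp_converges[of "norm z"] by (subst sums_Suc_iff) simp
  have "norm (exp z - 1) = norm (suminf (\<lambda>n. z^Suc n /\<^sub>R fact (Suc n)))"
    using s1 by (simp add: sums_iff)
  also have "\<dots> \<le> suminf (\<lambda>n. norm z^Suc n /\<^sub>R fact (Suc n))"
    by (rule norm_suminf_le) (use s2 in \<open>auto simp: sums_iff norm_power norm_mult\<close>)
  also have "\<dots> = exp (norm z) - 1" using s2 by (simp add: sums_iff)
  finally show ?thesis .
qed

lemma re_pos: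
  fixes z :: complex
  assumes "norm z < ln 2"
  shows "Re (exp z * (2 - exp z)) > 0"
proof -
  define w where "w = exp z - 1"
  have "exp (norm z) < exp (ln (2::real))" using assms by (subst exp_less_cancel_iff)
  then have "exp (norm z) < 2" by simp
  then have w1: "norm w < 1" using exp_bound[of z] unfolding w_def by linarith
  have eq: "exp z * (2 - exp z) = 1 - w^2" unfolding w_def by (simp add: algebra_simps power2_eq_square)
  have "Re (w^2) \<le> norm (w^2)" by (rule complex_Re_le_cmod)
  also have "\<dots> = norm w ^ 2" by (simp add: norm_power)
  also have "\<dots> < 1" using w1 by (simp add: power_less_one_iff)
  finally show ?thesis unfolding eq by simp
qed

lemma part1:
  fixes x :: complex
  assumes x: "norm x < ln 2"
  shows "(\<lambda>n. complex_of_real (e_coef n) * x ^ n) sums csqrt (exp x * (2 - exp x))"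
proof -
  define f where "f = (\<lambda>z::complex. csqrt (exp z * (2 - exp z)))"
  define Fe where "Fe = fps_expansion f 0"
  define Ec where "Ec = Abs_fps (\<lambda>n. complex_of_real (e_coef n))"
  have holo: "f holomorphic_on ball 0 (ln 2)"
    unfolding f_def
  proof (intro holomorphic_on_csqrt' holomorphic_intros)
    fix z :: complex assume "z \<in> ball 0 (ln 2)"
    then have "Re (exp z * (2 - exp z)) > 0" by (intro re_pos) simp
    then show "exp z * (2 - exp z) \<notin> \<real>\<^sub>\<le>\<^sub>0"
      by (auto simp: complex_nonpos_Reals_iff)
  qed
  have hf: "f has_fps_expansion Fe"
    unfolding Fe_def by (rule has_fps_expansion_fps_expansion[OF open_ball _ holo]) simp
  have h1: "(\<lambda>z. f z * f z) has_fps_expansion Fe * Fe"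
    by (intro has_fps_expansion_mult hf)
  have feq: "(\<lambda>z. f z * f z) = (\<lambda>z. 2 * exp (1 * z) - exp (2 * z))"
  proof
    fix z :: complex
    have "f z * f z = exp z * (2 - exp z)"
      unfolding f_def using power2_csqrt[of "exp z * (2 - exp z)"] by (simp add: power2_eq_square)
    also have "\<dots> = 2 * exp (1 * z) - exp (2 * z)"
    proof -
      have "exp (2 * z) = exp z * exp z" by (simp only: mult_2 exp_add)
      then show ?thesis by (simp add: algebra_simps)
    qed
    finally show "f z * f z = 2 * exp (1 * z) - exp (2 * z)" .
  qed
  have h2: "(\<lambda>z. 2 * exp (1 * z) - exp (2 * z)) has_fps_expansion (fps_const 2 * fps_exp 1 - fps_exp (2::complex))"
    by (intro has_fps_expansion_diff has_fps_expansion_cmult_left has_fps_expansion_exp)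
  have FF: "Fe * Fe = fps_const 2 * fps_exp 1 - fps_exp (2::complex)"
    using h1 h2 unfolding feq by (rule fps_expansion_unique_complex)
  have EE: "Ec * Ec = fps_const 2 * fps_exp 1 - fps_exp (2::complex)"
  proof (rule fps_ext)
    fix n
    have "fps_nth (Ec * Ec) n = complex_of_real (fps_nth (Efps * Efps) n)"
      by (simp add: Ec_def fps_mult_nth e_coef_E)
    also have "\<dots> = complex_of_real (2 / fact n - 2^n / fact n)"
      unfolding E_sq by (simp add: numeral_fps_const)
    also have "\<dots> = fps_nth (fps_const 2 * fps_exp 1 - fps_exp (2::complex)) n"
      by simp
    finally show "fps_nth (Ec * Ec) n = fps_nth (fps_const 2 * fps_exp 1 - fps_exp (2::complex)) n" .
  qed
  have F0: "fps_nth Fe 0 = 1"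
    by (simp add: Fe_def fps_expansion_def f_def)
  have E0': "fps_nth Ec 0 = 1"
    by (simp add: Ec_def e_coef_E E0)
  have "Fe = Ec"
    by (rule fps_sqrt_unique) (simp_all add: FF EE F0 E0')
  then have coef: "(deriv ^^ n) f 0 / fact n = complex_of_real (e_coef n)" for n
    using fps_nth_fps_expansion[OF hf, of n] by (simp add: Ec_def)
  have "(\<lambda>n. (deriv ^^ n) f 0 / fact n * (x - 0)^n) sums f x"
    by (rule holomorphic_power_series[OF holo]) (use x in simp)
  then have "(\<lambda>n. complex_of_real (e_coef n) * (x - 0)^n) sums f x" by (simp only: coef)
  then show ?thesis by (simp add: f_def)
qed

lemma D'0: "fps_nth (fps_deriv Dfps) 0 = 1"
proof -
  have "fps_nth (Efps * fps_deriv Dfps) 0 = 1" by (simp add: ED)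
  then show ?thesis by (simp add: E0)
qed

lemma part2:
  shows "d_coef (n + 1) = (-1)^n / real (n + 1) * det (E_mat n)
          \<and> e_coef n = (-1)^n * det (F_mat n)"
proof
  have "E_mat n = mat n n (\<lambda>(i,j). if j \<le> i + 1 then fps_nth Efps (i+1-j) else 0)"
    unfolding E_mat_def e_coef_E ..
  then have "det (E_mat n) = (-1)^n * fps_nth (fps_deriv Dfps) n"
    using hess_det[OF ED E0] by simp
  also have "\<dots> = (-1)^n * (real (n+1) * d_coef (n+1))"
    by (simp add: d_coef_D)
  finally have dE: "det (E_mat n) = (-1)^n * (real (n+1) * d_coef (n+1))" .
  show "d_coef (n + 1) = (-1)^n / real (n + 1) * det (E_mat n)"
    unfolding dE by (simp add: field_simps power_mult_distrib[symmetric])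
next
  have "F_mat n = mat n n (\<lambda>(i,j). if j \<le> i + 1 then fps_nth (fps_deriv Dfps) (i+1-j) else 0)"
    unfolding F_mat_def
    by (intro arg_cong[where f="mat n n"]) (auto simp: fun_eq_iff d_coef_D Suc_diff_le)
  moreover have "fps_deriv Dfps * Efps = 1" using ED by (simp add: mult.commute)
  ultimately have "det (F_mat n) = (-1)^n * fps_nth Efps n"
    using hess_det[OF _ D'0] by simp
  then show "e_coef n = (-1)^n * det (F_mat n)"
    by (simp add: e_coef_E power_mult_distrib[symmetric])
qed

theorem theorem6p6:
  shows "(\<forall>x::complex. norm x < ln 2 \<longrightarrow>
            (\<lambda>n. complex_of_real (e_coef n) * x ^ n) sums csqrt (exp x * (2 - exp x)))
       \<and> (\<forall>n::nat. n \<ge> 1 \<longrightarrow>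
            d_coef (n + 1) = (-1)^n / real (n + 1) * det (E_mat n)
          \<and> e_coef n = (-1)^n * det (F_mat n))"
  using part1 part2 by blast

end
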